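(* For each $i\in\{1,2,3\}$ the points $P_i$, $P_i'$ and $C_2$ are collinear. Consequently the triangles $T=P_1P_2P_3$ and $T'=P_1'P_2'P_3'$ are perspective with perspector $C_2$.
   Context: Let $a>b>0$ and $c>0$ with $c^2=a^2-b^2$. Let $\mathcal{E}$ be the ellipse $x^2/a^2+y^2/b^2=1$, parametrized by $P(t)=(a\cos t,b\sin t)$. Fix $u\in\mathbb{R}$, let $M=(a\cos u,b\sin u)$ and $\Delta_u(t)=(x_u(t),y_u(t))$, where $x_u(t)=\frac1a\big(c^2(1+\cos(t+u))\cos t-a^2\cos u\big)$ and $y_u(t)=\frac1b\big(c^2\cos t\sin(t+u)-c^2\sin t-a^2\sin u\big)$ (the negative pedal curve of $\mathcal{E}$ with respect to $M$). For $i=1,2,3$ let $t_i=-u/3-2\pi(i-1)/3$, $P_i=P(t_i)$, $P_i'=\Delta_u(t_i)$ (the cusps). Let $C_2=\left(-\frac{a^2+b^2}{2a}\cos u,-\frac{a^2+b^2}{2b}\sin u\right)$ (the area centroid of $\Delta_u$). *)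

theory Defs
  imports "HOL-Analysis.Analysis"
begin

definition ell_pt :: "real \<Rightarrow> real \<Rightarrow> real \<Rightarrow> real \<times> real" where
  "ell_pt a b t = (a * cos t, b * sin t)"

text \<open>Negative pedal curve of the ellipse with respect to M = P(u).\<close>
definition neg_pedal :: "real \<Rightarrow> real \<Rightarrow> real \<Rightarrow> real \<Rightarrow> real \<Rightarrow> real \<times> real" where
  "neg_pedal a b c u t =
     ((1 / a) * (c^2 * (1 + cos (t + u)) * cos t - a^2 * cos u),
      (1 / b) * (c^2 * cos t * sin (t + u) - c^2 * sin t - a^2 * sin u))"

definition cusp_param :: "real \<Rightarrow> nat \<Rightarrow> real" where
  "cusp_param u i = - u / 3 - 2 * pi * (real i - 1) / 3"

text \<open>Area centroid C_2 of the negative pedal curve.\<close>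
definition centroid_C2 :: "real \<Rightarrow> real \<Rightarrow> real \<Rightarrow> real \<times> real" where
  "centroid_C2 a b u =
     (- (a^2 + b^2) / (2 * a) * cos u, - (a^2 + b^2) / (2 * b) * sin u)"

end

theory Submission
  imports Defs
begin

lemma col_det:
  fixes p q r :: "real \<times> real"
  assumes "(fst q - fst p) * (snd r - snd p) = (snd q - snd p) * (fst r - fst p)"
  shows "collinear {p, q, r}"
proof -
  have "collinear {0, q - p, r - p}"
  proof (cases "q - p = 0")
    case True thus ?thesis by (simp add: collinear_2)
  next
    case False
    show ?thesis
    proof (cases "fst q - fst p = 0")
      case True
      then have "snd q - snd p \<noteq> 0" using False by (simp add: prod_eq_iff)
      moreover have "fst r - fst p = 0"
        using assms True \<open>snd q - snd p \<noteq> 0\<close> by simp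
      ultimately have "r - p = ((snd r - snd p)/(snd q - snd p)) *\<^sub>R (q - p)"
        using True by (auto simp: prod_eq_iff)
      thus ?thesis unfolding collinear_lemma by blast
    next
      case F: False
      obtain p1 p2 where P: "p = (p1,p2)" by (cases p)
      obtain q1 q2 where Q: "q = (q1,q2)" by (cases q)
      obtain r1 r2 where R: "r = (r1,r2)" by (cases r)
      have d: "q1 - p1 \<noteq> 0" using F P Q by simp
      have h: "(q1 - p1) * (r2 - p2) = (q2 - p2) * (r1 - p1)" using assms P Q R by simp
      have e: "r2 - p2 = ((r1 - p1)/(q1 - p1)) * (q2 - p2)"
        using h d by (simp add: field_simps)
      have "r - p = ((fst r - fst p)/(fst q - fst p)) *\<^sub>R (q - p)"
        using d e P Q R by simp
      thus ?thesis unfolding collinear_lemma by blast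
    qed
  qed
  moreover have "collinear {q,p,r} \<longleftrightarrow> collinear {0, q-p, r-p}"
    by (rule collinear_3) (simp add: NO_MATCH_def)
  moreover have "{q,p,r} = {p,q,r}" by blast
  ultimately show ?thesis by simp
qed

lemma core:
  fixes a b x y cu su ctu stu :: real
  assumes "a > 0" "b > 0" "x^2 + y^2 = 1"
    "cu = 4*x^3 - 3*x" "su = -(y*(4*x^2 - 1))" "ctu = 2*x^2 - 1" "stu = -(2*x*y)"
  shows "((1/a) * ((a^2-b^2) * (1 + ctu) * x - a^2 * cu) - a*x) *
           (- (a^2 + b^2) / (2 * b) * su - b*y) =
         ((1/b) * ((a^2-b^2) * x * stu - (a^2-b^2) * y - a^2 * su) - b*y) *
           (- (a^2 + b^2) / (2 * a) * cu - a*x)"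
proof -
  have "a \<noteq> 0" "b \<noteq> 0" using assms(1,2) by auto
  then show ?thesis unfolding assms(4-7)
    apply (simp add: field_simps)
    by algebra
qed

lemma sin_treble': "sin (3 * (x::real)) = 3 * sin x - 4 * sin x ^ 3"
proof -
  have "sin (3*x) = sin (2*x + x)" by simp
  also have "\<dots> = 2 * sin x * cos x * cos x + (1 - 2 * sin x ^ 2) * sin x"
    by (simp only: sin_add sin_double cos_double_sin)
  also have "\<dots> = 3 * sin x - 4 * sin x ^ 3"
    using sin_cos_squared_add[of x] by algebra
  finally show ?thesis .
qed

lemma per: 
  assumes "k \<in> {0,1,2::real}" "u = -3*t - 2*pi*k"
  shows "cos u = cos (3*t) \<and> sin u = - sin (3*t) \<and> cos (t+u) = cos (2*t) \<and> sin (t+u) = - sin (2*t)"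
proof -
  have "\<exists>n::nat. k = real n" using assms(1) by (auto intro: exI[of _ 0] exI[of _ 1] exI[of _ 2])
  then obtain n::nat where k: "k = real n" by blast
  have e1: "u = - (3*t) - 2*pi*real n" and e2: "t + u = -(2*t) - 2*pi*real n" using assms(2) k by auto
  have z: "cos (2*pi*real n) = 1" "sin (2*pi*real n) = 0"
    using cos_2npi[of n] sin_2npi[of n] by (simp_all only: mult.commute mult.left_commute)
  have A: "cos u = cos (3*t) \<and> sin u = - sin (3*t)" unfolding e1 cos_diff sin_diff z by simp
  have B: "cos (t+u) = cos (2*t) \<and> sin (t+u) = - sin (2*t)" unfolding e2 cos_diff sin_diff z by simp
  show ?thesis using A B by blast
qed

theorem proposition8p2:
  fixes a b c u :: real
  assumes "a > b" and "b > 0" and "c > 0" and "c^2 = a^2 - b^2"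
  shows "\<forall>i \<in> {1, 2, 3::nat}.
           collinear {ell_pt a b (cusp_param u i),
                      neg_pedal a b c u (cusp_param u i),
                      centroid_C2 a b u}"
proof
  fix i :: nat assume i: "i \<in> {1,2,3}"
  define t where "t = cusp_param u i"
  have k: "real i - 1 \<in> {0,1,2::real}" using i by auto
  define X where "X = pi*(real i - 1)"
  have "t = -u/3 - 2*X/3" unfolding t_def cusp_param_def X_def by (simp add: mult.assoc)
  then have "u = -3*t - 2*X" by linarith
  then have "u = -3*t - 2*pi*(real i - 1)" unfolding X_def by (simp add: mult.assoc)
  from per[OF k this] have P: "cos u = cos (3*t)" "sin u = - sin (3*t)"
    "cos (t+u) = cos (2*t)" "sin (t+u) = - sin (2*t)" by auto
  have a0: "a > 0" using assms by simp
  have s3: "sin t ^ 3 = sin t * sin t ^ 2" by (simp add: power3_eq_cube power2_eq_square)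
  have s3': "sin t ^ 3 = sin t * (1 - cos t ^ 2)" unfolding s3 sin_squared_eq ..
  have C: "cos u = 4 * cos t ^ 3 - 3 * cos t" "sin u = -(sin t * (4 * cos t ^ 2 - 1))"
    "cos (t+u) = 2 * cos t ^ 2 - 1" "sin (t+u) = -(2 * cos t * sin t)"
    using P cos_treble_cos[of t] sin_treble'[of t] cos_double_cos[of t] sin_double[of t] s3' by (simp_all add: power3_eq_cube power2_eq_square algebra_simps)
  have "collinear {ell_pt a b t, neg_pedal a b c u t, centroid_C2 a b u}"
    apply (rule col_det)
    unfolding ell_pt_def neg_pedal_def centroid_C2_def fst_conv snd_conv assms(4)
    by (rule core[OF a0 assms(2) sin_cos_squared_add2[of t] C(1,2,3,4)])
  then show "collinear {ell_pt a b (cusp_param u i), neg_pedal a b c u (cusp_param u i), centroid_C2 a b u}"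
    unfolding t_def .
qed

end
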